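(* Let $\Lambda$ be a normal subshift and $\mathfrak L_\Lambda^{\min}$ its minimal presentation. Then $\mathfrak L_\Lambda^{\min}$ satisfies condition (I).
   Context: Subshifts over a finite alphabet $\Sigma$: $B_l(\Lambda)$, $B_*(\Lambda)$ admissible words; $X_\Lambda$ the right one-sided subshift. $\Gamma_l^-(\mu)=\{\nu\in B_l(\Lambda):\nu\mu\in B_*(\Lambda)\}$, $\Gamma_*^+(\mu)=\{\nu:\mu\nu\in B_*(\Lambda)\}$; $\mu$ is $l$-synchronizing if $\Gamma_l^-(\mu)=\Gamma_l^-(\mu\omega)$ for all $\omega\in\Gamma_*^+(\mu)$, $S_l(\Lambda)$ the set of these; $\mu\sim_l\nu$ iff $\Gamma_l^-(\mu)=\Gamma_l^-(\nu)$. $\Lambda$ is normal if irreducible, infinite as a set, and for every $\eta\in B_l(\Lambda)$ and $k>l$ there is $\nu\in S_k(\Lambda)$ with $\eta\nu\in S_{k-l}(\Lambda)$. The minimal presentation $\mathfrak L_\Lambda^{\min}$ is the labeled Bratteli-type diagram with vertex sets $V_0$ a singleton and $V_l=S_l(\Lambda)/\!\sim_l$ for $l\ge1$, an edge labeled $\alpha$ from $[\alpha\nu]_l$ to $[\nu]_{l+1}$ for every $\nu\in S_{l+1}(\Lambda)$ and $\alpha\in\Sigma$ with $\alpha\nu\in B_*(\Lambda)$, and maps $\iota([\nu]_{l+1})=[\nu]_l$. For a vertex $v\in V_l$, $\Gamma^+_\infty(v)$ is the set of label sequences $(\lambda(e_1),\lambda(e_2),\dots)$ of infinite paths with $s(e_1)=v$,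 $e_i$ an edge from level $l+i-1$ to level $l+i$ and $t(e_i)=s(e_{i+1})$. The system satisfies condition (I) if $\Gamma^+_\infty(v)$ contains at least two distinct sequences for every vertex $v$. *)

theory Defs
  imports Main
begin

definition word_at :: "(int \<Rightarrow> 'a) \<Rightarrow> int \<Rightarrow> nat \<Rightarrow> 'a list" where
  "word_at x n k = map (\<lambda>i. x (n + int i)) [0..<k]"

definition Bstar :: "(int \<Rightarrow> 'a) set \<Rightarrow> 'a list set" where
  "Bstar L = {w. \<exists>x\<in>L. \<exists>n. w = word_at x n (length w)}"

definition Bl :: "(int \<Rightarrow> 'a) set \<Rightarrow> nat \<Rightarrow> 'a list set" where
  "Bl L l = {w \<in> Bstar L. length w = l}"

text \<open>Subshift: shift-invariant (sigma(L) = L) and closed in the product topology,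
  i.e. a configuration all of whose finite windows are admissible belongs to L.\<close>
definition is_subshift :: "(int \<Rightarrow> 'a::finite) set \<Rightarrow> bool" where
  "is_subshift L \<longleftrightarrow>
     (\<lambda>x n. x (n + 1)) ` L = L \<and>
     (\<forall>x. (\<forall>n k. word_at x n k \<in> Bstar L) \<longrightarrow> x \<in> L)"

definition Gamma_minus :: "(int \<Rightarrow> 'a) set \<Rightarrow> nat \<Rightarrow> 'a list \<Rightarrow> 'a list set" where
  "Gamma_minus L l \<mu> = {\<nu> \<in> Bl L l. \<nu> @ \<mu> \<in> Bstar L}"

definition Gamma_plus :: "(int \<Rightarrow> 'a) set \<Rightarrow> 'a list \<Rightarrow> 'a list set" where
  "Gamma_plus L \<mu> = {\<nu>. \<mu> @ \<nu> \<in> Bstar L}"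

definition Sync :: "(int \<Rightarrow> 'a) set \<Rightarrow> nat \<Rightarrow> 'a list set" where
  "Sync L l = {\<mu> \<in> Bstar L. \<forall>\<omega>\<in>Gamma_plus L \<mu>. Gamma_minus L l \<mu> = Gamma_minus L l (\<mu> @ \<omega>)}"

definition irreducible_shift :: "(int \<Rightarrow> 'a) set \<Rightarrow> bool" where
  "irreducible_shift L \<longleftrightarrow>
     (\<forall>\<mu>\<in>Bstar L. \<forall>\<nu>\<in>Bstar L. \<exists>\<omega>. \<mu> @ \<omega> @ \<nu> \<in> Bstar L)"

definition normal_shift :: "(int \<Rightarrow> 'a::finite) set \<Rightarrow> bool" where
  "normal_shift L \<longleftrightarrow> is_subshift L \<and> irreducible_shift L \<and> infinite L \<and>
     (\<forall>l \<eta> k. \<eta> \<in> Bl L l \<and> l < k \<longrightarrow>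
        (\<exists>\<nu>\<in>Sync L k. \<eta> @ \<nu> \<in> Sync L (k - l)))"

definition sim_rel :: "(int \<Rightarrow> 'a) set \<Rightarrow> nat \<Rightarrow> ('a list \<times> 'a list) set" where
  "sim_rel L l = {(\<mu>, \<nu>). \<mu> \<in> Sync L l \<and> \<nu> \<in> Sync L l \<and> Gamma_minus L l \<mu> = Gamma_minus L l \<nu>}"

definition cls :: "(int \<Rightarrow> 'a) set \<Rightarrow> nat \<Rightarrow> 'a list \<Rightarrow> 'a list set" where
  "cls L l \<mu> = sim_rel L l `` {\<mu>}"

text \<open>Vertex set V_l = S_l / ~_l.  For l = 0, S_0 = B_* and ~_0 has a single class,
  so V_0 is the singleton of the paper.\<close>
definition Vmin :: "(int \<Rightarrow> 'a) set \<Rightarrow> nat \<Rightarrow> 'a list set set" where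
  "Vmin L l = Sync L l // sim_rel L l"

definition Emin :: "(int \<Rightarrow> 'a) set \<Rightarrow> nat \<Rightarrow> 'a list set \<Rightarrow> 'a \<Rightarrow> 'a list set \<Rightarrow> bool" where
  "Emin L l v a w \<longleftrightarrow>
     (\<exists>\<nu>\<in>Sync L (Suc l). a # \<nu> \<in> Bstar L \<and> v = cls L l (a # \<nu>) \<and> w = cls L (Suc l) \<nu>)"

definition Gamma_inf :: "(int \<Rightarrow> 'a) set \<Rightarrow> nat \<Rightarrow> 'a list set \<Rightarrow> (nat \<Rightarrow> 'a) set" where
  "Gamma_inf L l v = {x. \<exists>vs :: nat \<Rightarrow> 'a list set.
      vs 0 = v \<and> (\<forall>i. Emin L (l + i) (vs i) (x i) (vs (Suc i)))}"

definition condition_I :: "(int \<Rightarrow> 'a) set \<Rightarrow> bool" where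
  "condition_I L \<longleftrightarrow>
     (\<forall>l. \<forall>v\<in>Vmin L l. \<exists>x\<in>Gamma_inf L l v. \<exists>y\<in>Gamma_inf L l v. x \<noteq> y)"

end

theory Submission imports Defs begin

lemma length_word_at[simp]: "length (word_at x n k) = k"
  by (simp add: word_at_def)

lemma word_at_add: "word_at x n (a+b) = word_at x n a @ word_at x (n + int a) b"
  unfolding word_at_def
proof -
  have "[0..<a+b] = [0..<a] @ map (\<lambda>i. i + a) [0..<b]"
    by (metis add.commute add_0 map_add_upt upt_add_eq_append zero_le)
  then show "map (\<lambda>i. x (n + int i)) [0..<a + b] =
    map (\<lambda>i. x (n + int i)) [0..<a] @ map (\<lambda>i. x (n + int a + int i)) [0..<b]"
    by (simp add: algebra_simps)
qed

lemma Bstar_factor: assumes "u @ v @ w \<in> Bstar L" shows "v \<in> Bstar L"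
proof -
  obtain x n where x: "x \<in> L" and e0: "u @ v @ w = word_at x n (length (u @ v @ w))"
    using assms unfolding Bstar_def by blast
  have e: "u @ v @ w = word_at x n (length u + length v + length w)" using e0 by (simp add: add.assoc)
  have "word_at x n (length u + length v + length w) =
     word_at x n (length u) @ word_at x (n + int (length u)) (length v) @ word_at x (n + int (length u) + int (length v)) (length w)"
    by (simp add: word_at_add add.assoc)
  with e have "v = word_at x (n + int (length u)) (length v)"
    by (simp add: append_eq_append_conv)
  with x show ?thesis unfolding Bstar_def by auto
qed

lemma Bstar_prefix: "u @ v \<in> Bstar L \<Longrightarrow> u \<in> Bstar L"
  using Bstar_factor[of "[]" u v] by simp

lemma Bstar_suffix: "u @ v \<in> Bstar L \<Longrightarrow> v \<in> Bstar L"
  using Bstar_factor[of u v "[]"] by simp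

lemma Bstar_ext_right: assumes "w \<in> Bstar L" shows "\<exists>\<theta>. length \<theta> = m \<and> w @ \<theta> \<in> Bstar L"
proof -
  obtain x n where x: "x \<in> L" and e: "w = word_at x n (length w)"
    using assms unfolding Bstar_def by auto
  have "w @ word_at x (n + int (length w)) m = word_at x n (length w + m)"
    using e by (simp add: word_at_add)
  then have "w @ word_at x (n + int (length w)) m \<in> Bstar L"
    using x unfolding Bstar_def by (metis (mono_tags, lifting) length_word_at mem_Collect_eq)
  then show ?thesis by (intro exI[of _ "word_at x (n + int (length w)) m"]) simp
qed

lemma Bstar_ext_left: assumes "w \<in> Bstar L" shows "\<exists>c. c # w \<in> Bstar L"
proof -
  obtain x n where x: "x \<in> L" and e: "w = word_at x n (length w)"
    using assms unfolding Bstar_def by auto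
  have "word_at x (n - 1) (1 + length w) = word_at x (n-1) 1 @ word_at x n (length w)"
    using word_at_add[of x "n-1" 1 "length w"] by simp
  also have "word_at x (n-1) 1 = [x (n - 1)]" by (simp add: word_at_def)
  finally have "x (n-1) # w = word_at x (n - 1) (length (x (n-1) # w))" using e by simp
  then show ?thesis using x unfolding Bstar_def by blast
qed


lemma Sync_Bstar: "\<mu> \<in> Sync L k \<Longrightarrow> \<mu> \<in> Bstar L"
  by (simp add: Sync_def)

lemma Sync_cons: assumes nu: "\<nu> \<in> Sync L (Suc k)" and a: "a # \<nu> \<in> Bstar L"
  shows "a # \<nu> \<in> Sync L k"
  unfolding Sync_def
proof (intro CollectI conjI ballI a)
  fix \<omega> assume "\<omega> \<in> Gamma_plus L (a # \<nu>)"
  then have aw: "a # \<nu> @ \<omega> \<in> Bstar L" by (simp add: Gamma_plus_def)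
  then have "[a] @ (\<nu> @ \<omega>) \<in> Bstar L" by simp
  then have "\<nu> @ \<omega> \<in> Bstar L" by (rule Bstar_suffix)
  then have G: "Gamma_minus L (Suc k) \<nu> = Gamma_minus L (Suc k) (\<nu> @ \<omega>)"
    using nu unfolding Sync_def Gamma_plus_def by auto
  have "Gamma_minus L k (a # \<nu>) = Gamma_minus L k (a # \<nu> @ \<omega>)"
  proof
    show "Gamma_minus L k (a # \<nu>) \<subseteq> Gamma_minus L k (a # \<nu> @ \<omega>)"
    proof
      fix \<eta> assume "\<eta> \<in> Gamma_minus L k (a # \<nu>)"
      then have h: "\<eta> \<in> Bl L k" "\<eta> @ a # \<nu> \<in> Bstar L" by (auto simp: Gamma_minus_def)
      have "(\<eta> @ [a]) @ \<nu> \<in> Bstar L" using h by simp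
      moreover have "\<eta> @ [a] \<in> Bstar L" using Bstar_prefix[OF \<open>(\<eta> @ [a]) @ \<nu> \<in> Bstar L\<close>] .
      ultimately have "\<eta> @ [a] \<in> Gamma_minus L (Suc k) \<nu>"
        using h by (auto simp: Gamma_minus_def Bl_def)
      then have "\<eta> @ [a] \<in> Gamma_minus L (Suc k) (\<nu> @ \<omega>)" using G by simp
      then have "\<eta> @ a # \<nu> @ \<omega> \<in> Bstar L" by (simp add: Gamma_minus_def)
      then show "\<eta> \<in> Gamma_minus L k (a # \<nu> @ \<omega>)" using h by (simp add: Gamma_minus_def)
    qed
  next
    show "Gamma_minus L k (a # \<nu> @ \<omega>) \<subseteq> Gamma_minus L k (a # \<nu>)"
    proof
      fix \<eta> assume "\<eta> \<in> Gamma_minus L k (a # \<nu> @ \<omega>)"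
      then have h: "\<eta> \<in> Bl L k" "(\<eta> @ a # \<nu>) @ \<omega> \<in> Bstar L" by (auto simp: Gamma_minus_def)
      then show "\<eta> \<in> Gamma_minus L k (a # \<nu>)" using Bstar_prefix[OF h(2)] by (simp add: Gamma_minus_def)
    qed
  qed
  then show "Gamma_minus L k (a # \<nu>) = Gamma_minus L k ((a # \<nu>) @ \<omega>)" by simp
qed

lemma Sync_prefix: "\<rho> @ \<nu> \<in> Bstar L \<Longrightarrow> \<nu> \<in> Sync L (k + length \<rho>) \<Longrightarrow> \<rho> @ \<nu> \<in> Sync L k"
proof (induction \<rho> arbitrary: k)
  case Nil then show ?case by simp
next
  case (Cons a \<rho>)
  have "\<rho> @ \<nu> \<in> Bstar L" using Cons.prems(1) Bstar_suffix[of "[a]" "\<rho> @ \<nu>"] by simp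
  moreover have "\<nu> \<in> Sync L (Suc k + length \<rho>)" using Cons.prems(2) by simp
  ultimately have "\<rho> @ \<nu> \<in> Sync L (Suc k)" using Cons.IH by blast
  then show ?case using Sync_cons Cons.prems(1) by fastforce
qed

lemma Sync_mono: assumes mu: "\<mu> \<in> Sync L (Suc k)" shows "\<mu> \<in> Sync L k"
  unfolding Sync_def
proof (intro CollectI conjI ballI)
  show "\<mu> \<in> Bstar L" using mu by (simp add: Sync_def)
  fix \<omega> assume om: "\<omega> \<in> Gamma_plus L \<mu>"
  then have G: "Gamma_minus L (Suc k) \<mu> = Gamma_minus L (Suc k) (\<mu> @ \<omega>)"
    using mu unfolding Sync_def by auto
  show "Gamma_minus L k \<mu> = Gamma_minus L k (\<mu> @ \<omega>)"
  proof
    show "Gamma_minus L k \<mu> \<subseteq> Gamma_minus L k (\<mu> @ \<omega>)"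
    proof
      fix \<eta> assume "\<eta> \<in> Gamma_minus L k \<mu>"
      then have h: "\<eta> \<in> Bl L k" "\<eta> @ \<mu> \<in> Bstar L" by (auto simp: Gamma_minus_def)
      obtain c where c: "c # \<eta> @ \<mu> \<in> Bstar L" using Bstar_ext_left[OF h(2)] by auto
      have "c # \<eta> \<in> Bstar L" using Bstar_prefix[of "c # \<eta>" \<mu>] c by simp
      then have "c # \<eta> \<in> Gamma_minus L (Suc k) \<mu>" using c h by (auto simp: Gamma_minus_def Bl_def)
      then have "c # \<eta> \<in> Gamma_minus L (Suc k) (\<mu> @ \<omega>)" using G by simp
      then have "[c] @ (\<eta> @ \<mu> @ \<omega>) \<in> Bstar L" by (simp add: Gamma_minus_def)
      then have "\<eta> @ \<mu> @ \<omega> \<in> Bstar L" by (rule Bstar_suffix)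
      then show "\<eta> \<in> Gamma_minus L k (\<mu> @ \<omega>)" using h by (simp add: Gamma_minus_def)
    qed
  next
    show "Gamma_minus L k (\<mu> @ \<omega>) \<subseteq> Gamma_minus L k \<mu>"
      unfolding Gamma_minus_def
      using Bstar_prefix[of "_ @ \<mu>" \<omega> L] by auto
  qed
qed

lemma Sync_ext: assumes "\<mu> \<in> Sync L k" "\<mu> @ \<omega> \<in> Bstar L"
  shows "\<mu> @ \<omega> \<in> Sync L k" "Gamma_minus L k \<mu> = Gamma_minus L k (\<mu> @ \<omega>)"
proof -
  show G: "Gamma_minus L k \<mu> = Gamma_minus L k (\<mu> @ \<omega>)"
    using assms unfolding Sync_def Gamma_plus_def by auto
  show "\<mu> @ \<omega> \<in> Sync L k"
    unfolding Sync_def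
  proof (intro CollectI conjI ballI assms(2))
    fix \<omega>' assume "\<omega>' \<in> Gamma_plus L (\<mu> @ \<omega>)"
    then have "\<omega> @ \<omega>' \<in> Gamma_plus L \<mu>" by (simp add: Gamma_plus_def)
    then have "Gamma_minus L k \<mu> = Gamma_minus L k (\<mu> @ \<omega> @ \<omega>')"
      using assms unfolding Sync_def by auto
    then show "Gamma_minus L k (\<mu> @ \<omega>) = Gamma_minus L k ((\<mu> @ \<omega>) @ \<omega>')" using G by simp
  qed
qed

lemma cls_eq: "\<mu> \<in> Sync L k \<Longrightarrow> \<mu>' \<in> Sync L k \<Longrightarrow> Gamma_minus L k \<mu> = Gamma_minus L k \<mu>'
  \<Longrightarrow> cls L k \<mu> = cls L k \<mu>'"
  unfolding cls_def sim_rel_def by auto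

lemma step:
  assumes N: "normal_shift L" and w: "w \<in> Sync L k"
  shows "\<exists>a r. (\<exists>\<theta>. w @ \<theta> = a # r) \<and> r \<in> Sync L (Suc k) \<and> a # r \<in> Bstar L
     \<and> cls L k (a # r) = cls L k w"
proof -
  have wB: "w \<in> Bstar L" using w by (simp add: Sync_def)
  obtain c where c: "w @ [c] \<in> Bstar L"
    using Bstar_ext_right[OF wB, of 1] by (auto simp: length_Suc_conv)
  define \<eta> where "\<eta> = w @ [c]"
  have "\<eta> \<in> Bl L (length \<eta>)" using c by (simp add: \<eta>_def Bl_def)
  moreover have "length \<eta> < length \<eta> + k + 1" by simp
  ultimately obtain \<nu> where nu: "\<nu> \<in> Sync L (length \<eta> + k + 1)"
    and en: "\<eta> @ \<nu> \<in> Sync L (length \<eta> + k + 1 - length \<eta>)"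
    using N unfolding normal_shift_def by blast
  have en2: "\<eta> @ \<nu> \<in> Sync L (Suc k)" using en by simp
  define r where "r = w @ \<nu>"
  have split: "\<eta> @ \<nu> = hd \<eta> # tl \<eta> @ \<nu>" by (simp add: \<eta>_def)
  have enB: "\<eta> @ \<nu> \<in> Bstar L" using en2 by (simp add: Sync_def)
  have tB: "tl \<eta> @ \<nu> \<in> Bstar L" using enB split Bstar_suffix[of "[hd \<eta>]" "tl \<eta> @ \<nu>"] by simp
  have "\<nu> \<in> Sync L (Suc (Suc k) + length (tl \<eta>))" using nu by (simp add: \<eta>_def add.commute)
  then have "tl \<eta> @ \<nu> \<in> Sync L (Suc (Suc k))" using Sync_prefix tB by blast
  then have tS: "tl \<eta> @ \<nu> \<in> Sync L (Suc k)" by (rule Sync_mono)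
  have eS: "\<eta> @ \<nu> \<in> Sync L k" using Sync_mono[OF en2] .
  have "w @ [c] @ \<nu> \<in> Bstar L" using enB by (simp add: \<eta>_def)
  then have "Gamma_minus L k w = Gamma_minus L k (w @ [c] @ \<nu>)" using Sync_ext(2)[OF w] by blast
  then have "cls L k (\<eta> @ \<nu>) = cls L k w" using cls_eq[OF eS w] by (simp add: \<eta>_def)
  moreover have e: "hd \<eta> # tl \<eta> @ \<nu> = \<eta> @ \<nu>" using split by simp
  moreover have "\<exists>\<theta>. w @ \<theta> = \<eta> @ \<nu>" by (auto simp: \<eta>_def)
  ultimately show ?thesis
    using tS enB
    by (intro exI[of _ "hd \<eta>"] exI[of _ "tl \<eta> @ \<nu>"]) (metis append_Cons)
qed


lemma path_exists:
  assumes N: "normal_shift L" and w0: "w0 \<in> Sync L l"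
  shows "\<exists>x \<in> Gamma_inf L l (cls L l w0). \<forall>i < length w0. x i = w0 ! i"
proof -
  define P where "P k w ar \<longleftrightarrow> (\<exists>\<theta>. w @ \<theta> = fst ar # snd ar) \<and> snd ar \<in> Sync L (Suc k)
      \<and> fst ar # snd ar \<in> Bstar L \<and> cls L k (fst ar # snd ar) = cls L k w" for k w ar
  define f where "f k w = (SOME ar. P k w ar)" for k w
  have fP: "P k w (f k w)" if "w \<in> Sync L k" for k w
  proof -
    from step[OF N that] obtain a r where "P k w (a, r)" unfolding P_def by auto
    then show ?thesis unfolding f_def by (rule someI)
  qed
  define ws where "ws = rec_nat w0 (\<lambda>i w. snd (f (l+i) w))"
  have ws0: "ws 0 = w0" and wsS: "ws (Suc i) = snd (f (l+i) (ws i))" for i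
    by (simp_all add: ws_def)
  have inv: "ws i \<in> Sync L (l+i)" for i
  proof (induction i)
    case 0 then show ?case using w0 ws0 by simp
  next
    case (Suc i) then show ?case using fP[OF Suc] wsS by (simp add: P_def)
  qed
  define x where "x i = fst (f (l+i) (ws i))" for i
  define vs where "vs i = cls L (l+i) (ws i)" for i
  have "x \<in> Gamma_inf L l (cls L l w0)"
    unfolding Gamma_inf_def
  proof (intro CollectI exI[of _ vs] conjI allI)
    show "vs 0 = cls L l w0" using ws0 by (simp add: vs_def)
    fix i
    have p: "P (l+i) (ws i) (f (l+i) (ws i))" using fP[OF inv] .
    show "Emin L (l + i) (vs i) (x i) (vs (Suc i))"
      unfolding Emin_def
      using p by (intro bexI[of _ "ws (Suc i)"]) (auto simp: P_def vs_def x_def wsS)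
  qed
  moreover have pre: "\<exists>\<rho>. ws i = drop i w0 @ \<rho>" if "i \<le> length w0" for i
    using that
  proof (induction i)
    case 0 then show ?case using ws0 by simp
  next
    case (Suc i)
    then obtain \<rho> where r: "ws i = drop i w0 @ \<rho>" by auto
    have p: "P (l+i) (ws i) (f (l+i) (ws i))" using fP[OF inv] .
    then obtain \<theta> where t: "ws i @ \<theta> = x i # ws (Suc i)" by (auto simp: P_def x_def wsS)
    have "drop i w0 = w0 ! i # drop (Suc i) w0" using Suc.prems by (simp add: Cons_nth_drop_Suc)
    then show ?case using t r by (metis append.assoc append_Cons list.inject)
  qed
  moreover have "x i = w0 ! i" if il: "i < length w0" for i
  proof -
    obtain \<rho> where r: "ws i = drop i w0 @ \<rho>" using pre[of i] il by fastforce
    have p: "P (l+i) (ws i) (f (l+i) (ws i))" using fP[OF inv] .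
    then obtain \<theta> where t: "ws i @ \<theta> = x i # ws (Suc i)" by (auto simp: P_def x_def wsS)
    have "drop i w0 = w0 ! i # drop (Suc i) w0" using il by (simp add: Cons_nth_drop_Suc)
    then show ?thesis using t r by auto
  qed
  ultimately show ?thesis by blast
qed


lemma concat_rep_nth: "j < k * length p \<Longrightarrow> concat (replicate k p) ! j = p ! (j mod length p)"
proof (induction k arbitrary: j)
  case 0 then show ?case by simp
next
  case (Suc k)
  show ?case
  proof (cases "j < length p")
    case True then show ?thesis by (simp add: nth_append)
  next
    case False
    then have "j - length p < k * length p" using Suc.prems by simp
    then show ?thesis using False Suc.IH[of "j - length p"]
      by (simp add: nth_append le_mod_geq)
  qed
qed

lemma concat_rep_length: "length (concat (replicate k p)) = k * length p"
  by (induction k) auto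

lemma rep_shift: "\<mu> @ concat (replicate k (\<omega> @ \<mu>)) = concat (replicate k (\<mu> @ \<omega>)) @ \<mu>"
  by (induction k) auto

lemma rep_comm: "concat (replicate k p) @ p = p @ concat (replicate k p)"
proof -
  have "concat (replicate k p) @ p = concat (replicate k p @ [p])" by simp
  also have "\<dots> = concat (p # replicate k p)" by (simp add: replicate_append_same)
  finally show ?thesis by simp
qed

lemma periodic_mod:
  fixes x :: "int \<Rightarrow> 'a" and q :: int
  assumes per: "\<And>m. x (m + q) = x m" and q: "q > 0"
  shows "x m = x (m mod q)"
proof -
  have A: "x (r + int n * q) = x r" for r n
  proof (induction n)
    case 0 then show ?case by simp
  next
    case (Suc n)
    have "r + int (Suc n) * q = (r + int n * q) + q" by (simp add: algebra_simps)
    then show ?case using per[of "r + int n * q"] Suc.IH by (simp only:)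
  qed
  have m: "m mod q + (m div q) * q = m" by (rule mod_div_mult_eq)
  show ?thesis
  proof (cases "m div q \<ge> 0")
    case True
    define n where "n = nat (m div q)"
    have n: "m div q = int n" using True by (simp add: n_def)
    have "m mod q + int n * q = m" using m n by simp
    then show ?thesis using A[of "m mod q" n] by simp
  next
    case False
    define n where "n = nat (- (m div q))"
    have n: "m div q = - int n" using False by (simp add: n_def)
    have "m mod q - int n * q = m" using m n by simp
    then have e: "m + int n * q = m mod q" by linarith
    have "x (m + int n * q) = x m" using A[of m n] .
    then show ?thesis using e by simp
  qed
qed


lemma uniq_contra:
  assumes N: "normal_shift L" and mu: "\<mu> \<in> Bstar L" and ne: "\<mu> \<noteq> []"
    and U: "\<And>\<omega>1 \<omega>2. length \<omega>1 = length \<omega>2 \<Longrightarrow> \<mu> @ \<omega>1 \<in> Bstar L \<Longrightarrow> \<mu> @ \<omega>2 \<in> Bstar L \<Longrightarrow> \<omega>1 = \<omega>2"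
  shows False
proof -
  have irr: "irreducible_shift L" and inf: "infinite L" using N by (auto simp: normal_shift_def)
  obtain \<omega> where om: "\<mu> @ \<omega> @ \<mu> \<in> Bstar L" using irr mu unfolding irreducible_shift_def by blast
  define p where "p = \<omega> @ \<mu>"
  define q where "q = length p"
  have q0: "q > 0" using ne by (simp add: q_def p_def)
  have mp: "\<mu> @ p \<in> Bstar L" using om by (simp add: p_def)
  have blocks: "\<mu> @ concat (replicate k p) \<in> Bstar L" for k
  proof (induction k)
    case 0 then show ?case using mu by simp
  next
    case (Suc k)
    define R where "R = concat (replicate k p)"
    obtain \<theta> where t: "length \<theta> = q" "(\<mu> @ R) @ \<theta> \<in> Bstar L"
      using Bstar_ext_right[OF Suc.IH[folded R_def], of q] by auto
    have "\<mu> @ R = concat (replicate k (\<mu> @ \<omega>)) @ \<mu>" unfolding R_def p_def by (rule rep_shift)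
    then have "concat (replicate k (\<mu> @ \<omega>)) @ (\<mu> @ \<theta>) \<in> Bstar L" using t by simp
    then have "\<mu> @ \<theta> \<in> Bstar L" by (rule Bstar_suffix)
    then have "\<theta> = p" using U[of \<theta> p] t(1) mp by (simp add: q_def)
    then have "\<mu> @ R @ p \<in> Bstar L" using t by simp
    then show ?case using rep_comm[of k p] by (simp add: R_def)
  qed
  have perw: "u ! 0 = u ! q" if u: "u \<in> Bstar L" "length u = Suc q" for u
  proof -
    obtain \<zeta> where z: "\<mu> @ \<zeta> @ u \<in> Bstar L" using irr mu u(1) unfolding irreducible_shift_def by blast
    define M where "M = length \<zeta> + Suc q"
    define R where "R = concat (replicate M p)"
    have lR: "length R = M * q" by (simp add: R_def concat_rep_length q_def)
    have MR: "M \<le> length R" using lR q0 by simp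
    have i1: "length \<zeta> + q < M * length p" using lR MR by (simp add: M_def q_def)
    have "(\<mu> @ take M R) @ drop M R \<in> Bstar L" using blocks[of M] by (simp add: R_def)
    then have "\<mu> @ take M R \<in> Bstar L" by (rule Bstar_prefix)
    then have eq: "\<zeta> @ u = take M R" using U[of "\<zeta> @ u" "take M R"] z MR u(2)
      by (simp add: M_def)
    have "u ! 0 = (\<zeta> @ u) ! length \<zeta>" by (simp add: nth_append)
    also have "\<dots> = R ! length \<zeta>" using eq by (simp add: M_def)
    also have "\<dots> = p ! (length \<zeta> mod q)"
      using concat_rep_nth[of "length \<zeta>" M p] i1 by (simp add: R_def q_def)
    finally have a: "u ! 0 = p ! (length \<zeta> mod q)" .
    have "u ! q = (\<zeta> @ u) ! (length \<zeta> + q)" by (simp add: nth_append)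
    also have "\<dots> = R ! (length \<zeta> + q)" using eq by (simp add: M_def)
    also have "\<dots> = p ! ((length \<zeta> + q) mod q)"
      using concat_rep_nth[of "length \<zeta> + q" M p] i1 by (simp add: R_def q_def)
    finally have b: "u ! q = p ! (length \<zeta> mod q)" by simp
    show ?thesis using a b by simp
  qed
  have per: "x (m + int q) = x m" if x: "x \<in> L" for x m
  proof -
    have "word_at x m (Suc q) \<in> Bstar L" using x unfolding Bstar_def by fastforce
    from perw[OF this] show ?thesis by (simp add: word_at_def del: upt_Suc)
  qed
  have "L \<subseteq> (\<lambda>g. \<lambda>m. g ! nat (m mod int q)) ` {g. set g \<subseteq> UNIV \<and> length g = q}"
  proof
    fix x assume x: "x \<in> L"
    define g where "g = map (\<lambda>i. x (int i)) [0..<q]"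
    have "x = (\<lambda>m. g ! nat (m mod int q))"
    proof
      fix m
      have "nat (m mod int q) < q" using q0 by (simp add: nat_less_iff)
      then have "g ! nat (m mod int q) = x (m mod int q)" using q0 by (simp add: g_def)
      also have "\<dots> = x m" using periodic_mod[of x "int q" m] per[OF x] q0 by simp
      finally show "x m = g ! nat (m mod int q)" by simp
    qed
    then show "x \<in> (\<lambda>g. \<lambda>m. g ! nat (m mod int q)) ` {g. set g \<subseteq> UNIV \<and> length g = q}"
      by (auto simp: g_def)
  qed
  moreover have "finite {g :: 'a list. set g \<subseteq> UNIV \<and> length g = q}"
    by (rule finite_lists_length_eq) simp
  ultimately have "finite L" by (meson finite_imageI finite_subset)
  then show False using inf by simp
qed


lemma two_ext:
  assumes N: "normal_shift L" and mu: "\<mu> \<in> Bstar L"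
  shows "\<exists>\<omega>1 \<omega>2. length \<omega>1 = length \<omega>2 \<and> \<omega>1 \<noteq> \<omega>2 \<and> \<mu> @ \<omega>1 \<in> Bstar L \<and> \<mu> @ \<omega>2 \<in> Bstar L"
proof (rule ccontr)
  assume H: "\<not> ?thesis"
  obtain c where c: "\<mu> @ [c] \<in> Bstar L"
    using Bstar_ext_right[OF mu, of 1] by (auto simp: length_Suc_conv)
  show False
  proof (rule uniq_contra[OF N c])
    show "\<mu> @ [c] \<noteq> []" by simp
    fix \<omega>1 \<omega>2 assume "length \<omega>1 = length \<omega>2" "(\<mu> @ [c]) @ \<omega>1 \<in> Bstar L" "(\<mu> @ [c]) @ \<omega>2 \<in> Bstar L"
    then show "\<omega>1 = \<omega>2" using H by (metis append.assoc append_Cons append_Nil length_Cons list.inject)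
  qed
qed

theorem proposition2p14:
  fixes L :: "(int \<Rightarrow> 'a::finite) set"
  assumes "normal_shift L"
  shows "condition_I L"
  unfolding condition_I_def
proof (intro allI ballI)
  fix l v assume "v \<in> Vmin L l"
  then obtain \<mu> where mu: "\<mu> \<in> Sync L l" and v: "v = cls L l \<mu>"
    unfolding Vmin_def quotient_def cls_def by blast
  have muB: "\<mu> \<in> Bstar L" using mu by (simp add: Sync_def)
  obtain \<omega>1 \<omega>2 where o: "length \<omega>1 = length \<omega>2" "\<omega>1 \<noteq> \<omega>2" "\<mu> @ \<omega>1 \<in> Bstar L" "\<mu> @ \<omega>2 \<in> Bstar L"
    using two_ext[OF assms muB] by blast
  have s1: "\<mu> @ \<omega>1 \<in> Sync L l" and c1: "cls L l (\<mu> @ \<omega>1) = v"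
    using Sync_ext[OF mu o(3)] cls_eq[of "\<mu> @ \<omega>1" L l \<mu>] mu v by auto
  have s2: "\<mu> @ \<omega>2 \<in> Sync L l" and c2: "cls L l (\<mu> @ \<omega>2) = v"
    using Sync_ext[OF mu o(4)] cls_eq[of "\<mu> @ \<omega>2" L l \<mu>] mu v by auto
  obtain x where x: "x \<in> Gamma_inf L l v" "\<forall>i < length (\<mu> @ \<omega>1). x i = (\<mu> @ \<omega>1) ! i"
    using path_exists[OF assms s1] c1 by auto
  obtain y where y: "y \<in> Gamma_inf L l v" "\<forall>i < length (\<mu> @ \<omega>2). y i = (\<mu> @ \<omega>2) ! i"
    using path_exists[OF assms s2] c2 by auto
  obtain j where j: "j < length \<omega>1" "\<omega>1 ! j \<noteq> \<omega>2 ! j"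
    using o(1,2) nth_equalityI by blast
  have "x (length \<mu> + j) = \<omega>1 ! j" using x(2) j(1) by (simp add: nth_append)
  moreover have "y (length \<mu> + j) = \<omega>2 ! j" using y(2) j(1) o(1) by (simp add: nth_append)
  ultimately have "x \<noteq> y" using j(2) by auto
  then show "\<exists>x\<in>Gamma_inf L l v. \<exists>y\<in>Gamma_inf L l v. x \<noteq> y" using x(1) y(1) by blast
qed

end
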